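(* Let $n\ge1$ and $F:\mathbb{F}_{2^n}\to\mathbb{F}_{2^n}$ any function. Then $F$ is an o-polynomial if and only if both $$\sum_{b\in\mathbb{F}_{2^n}^*}\sum_{v\in\mathbb{F}_{2^n}} W_F^2(bv,v) = (2^n-1)2^{2n+1}$$ and $$\sum_{b\in \mathbb{F}_{2^n}^*}\ \sum_{v_1,v_2\in \mathbb{F}_{2^n}}W_F(bv_1,v_1)W_F(bv_2,v_2)W_F(b(v_1+v_2),v_1+v_2)=(2^n-1)2^{3n+2}$$ hold.
   Context: $tr_n$ denotes the absolute trace from $\mathbb{F}_{2^n}$ to $\mathbb{F}_2$, $\mathbb{F}_{2^n}^*=\mathbb{F}_{2^n}\setminus\{0\}$, and $W_F(u,v)=\sum_{x\in\mathbb{F}_{2^n}}(-1)^{tr_n(vF(x))+tr_n(ux)}$. In $PG(2,2^n)$, a hyperoval is a set of $2^n+2$ points no three of which lie on a common line. A function (polynomial) $F$ over $\mathbb{F}_{2^n}$ is an o-polynomial if $\{(1,t,F(t)) : t\in\mathbb{F}_{2^n}\}\cup\{(0,1,0),(0,0,1)\}$ is a hyperoval of $PG(2,2^n)$. Equivalently (known fact), for every $a\in\mathbb{F}_{2^n}$ and $b\in\mathbb{F}_{2^n}^*$ the equation $F(x)+bx=a$ has $0$ or $2$ solutions in $\mathbb{F}_{2^n}$. *)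

theory Defs
  imports Main
begin

text \<open>The finite field GF(2^n) is modelled by a finite field type 'a with CARD('a) = 2^n
  (this forces characteristic 2).\<close>

definition tr :: "nat \<Rightarrow> 'a::field \<Rightarrow> 'a" where
  "tr n x = (\<Sum>i<n. x ^ (2 ^ i))"

definition trbit :: "nat \<Rightarrow> 'a::field \<Rightarrow> nat" where
  "trbit n x = (if tr n x = 0 then 0 else 1)"

definition walsh :: "nat \<Rightarrow> ('a::{field,finite} \<Rightarrow> 'a) \<Rightarrow> 'a \<Rightarrow> 'a \<Rightarrow> int" where
  "walsh n F u v = (\<Sum>x\<in>UNIV. (-1) ^ (trbit n (v * F x) + trbit n (u * x)))"

text \<open>Projective plane PG(2,q): points are nonzero triples up to nonzero scalars.\<close>
definition proj_point :: "'a::field \<times> 'a \<times> 'a \<Rightarrow> ('a \<times> 'a \<times> 'a) set" where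
  "proj_point p = {(c * fst p, c * fst (snd p), c * snd (snd p)) | c. c \<noteq> 0}"

definition det3 :: "'a::field \<times> 'a \<times> 'a \<Rightarrow> 'a \<times> 'a \<times> 'a \<Rightarrow> 'a \<times> 'a \<times> 'a \<Rightarrow> 'a" where
  "det3 p q r = (case p of (a1,a2,a3) \<Rightarrow> case q of (b1,b2,b3) \<Rightarrow> case r of (c1,c2,c3) \<Rightarrow>
      a1*(b2*c3 - b3*c2) - a2*(b1*c3 - b3*c1) + a3*(b1*c2 - b2*c1))"

text \<open>The set is given by representative triples.\<close>
definition hyperoval :: "('a::{field,finite} \<times> 'a \<times> 'a) set \<Rightarrow> bool" where
  "hyperoval S \<longleftrightarrow> (0,0,0) \<notin> S \<and> card (proj_point ` S) = card (UNIV :: 'a set) + 2 \<and>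
     (\<forall>p\<in>S. \<forall>q\<in>S. \<forall>r\<in>S. proj_point p \<noteq> proj_point q \<and> proj_point p \<noteq> proj_point r
        \<and> proj_point q \<noteq> proj_point r \<longrightarrow> det3 p q r \<noteq> 0)"

definition o_polynomial :: "('a::{field,finite} \<Rightarrow> 'a) \<Rightarrow> bool" where
  "o_polynomial F \<longleftrightarrow> hyperoval ((\<lambda>t. (1, t, F t)) ` UNIV \<union> {(0,1,0), (0,0,1)})"

end

theory Submission imports Defs "HOL-Computational_Algebra.Polynomial"
begin

lemma sum_shift_add:
  fixes f :: "'a::{ab_group_add,finite} \<Rightarrow> 'b::comm_monoid_add"
  shows "(\<Sum>y\<in>UNIV. f (x + y)) = (\<Sum>y\<in>UNIV. f y)"
  by (rule sum.reindex_bij_witness[where i="\<lambda>y. y - x" and j="\<lambda>y. x + y"]) auto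

lemma sum_scale_mult:
  fixes f :: "'a::{field,finite} \<Rightarrow> 'b::comm_monoid_add"
  assumes "d \<noteq> 0"
  shows "(\<Sum>y\<in>UNIV. f (y * d)) = (\<Sum>y\<in>UNIV. f y)"
  by (rule sum.reindex_bij_witness[where i="\<lambda>y. y / d" and j="\<lambda>y. y * d"]) (use assms in auto)

lemma char2:
  assumes "n \<ge> 1" and "card (UNIV::'a set) = 2 ^ n"
  shows "(1::'a::{field,finite}) + 1 = 0"
proof -
  have "(\<Sum>y\<in>UNIV. (1::'a) + y) = (\<Sum>y\<in>UNIV. y)"
    using sum_shift_add[of "\<lambda>y. y" 1] by simp
  then have "of_nat (card (UNIV::'a set)) * (1::'a) = 0"
    by (simp add: sum.distrib)
  then have "(2::'a) ^ n = 0" using assms(2) by simp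
  then have "(2::'a) = 0" by simp
  then show ?thesis by (metis one_add_one)
qed

lemma fermat_field:
  fixes x :: "'a::{field,finite}"
  shows "x ^ card (UNIV::'a set) = x"
proof (cases "x = 0")
  case True then show ?thesis by (simp add: power_0_left)
next
  case False
  have "(\<Prod>y\<in>UNIV-{0}. x * y) = (\<Prod>y\<in>UNIV-{0}. y)"
    by (rule prod.reindex_bij_witness[where i="\<lambda>y. y / x" and j="\<lambda>y. x * y"]) (use False in auto)
  then have "x ^ card (UNIV - {0::'a}) * (\<Prod>y\<in>UNIV-{0}. y) = (\<Prod>y\<in>UNIV-{0}. y)"
    by (simp add: prod.distrib)
  moreover have "(\<Prod>y\<in>UNIV-{0::'a}. y) \<noteq> 0" by simp
  ultimately have "x ^ card (UNIV - {0::'a}) = 1" by simp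
  moreover have "card (UNIV - {0::'a}) = card (UNIV::'a set) - 1" by (simp add: card_Diff_singleton)
  moreover have "card (UNIV::'a set) \<ge> 1" by (simp add: Suc_leI finite_UNIV_card_ge_0)
  ultimately show ?thesis
    by (metis mult.right_neutral power_eq_if le_add_diff_inverse power_add power_one_right)
qed

lemma c2_double: assumes "(1::'a::field) + 1 = 0" shows "x + x = (0::'a)"
proof -
  have "x + x = (1 + 1) * x" by (simp add: distrib_right)
  then show ?thesis using assms by simp
qed

lemma c2_minus: assumes "(1::'a::field) + 1 = 0" shows "x - y = x + (y::'a)"
proof -
  have "x - y = x + y - (y + y)" by simp
  then show ?thesis using c2_double[OF assms, of y] by simp
qed

lemma c2_uminus: assumes "(1::'a::field) + 1 = 0" shows "- x = (x::'a)"
  using c2_minus[OF assms, of 0 x] by simp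

lemma c2_sq: assumes "(1::'a::field) + 1 = 0" shows "(x + y) ^ 2 = x ^ 2 + (y::'a) ^ 2"
proof -
  have "(x + y) ^ 2 = x^2 + y^2 + (x*y + x*y)" by (simp add: power2_eq_square algebra_simps)
  then show ?thesis using c2_double[OF assms, of "x*y"] by simp
qed

lemma c2_pow2: assumes "(1::'a::field) + 1 = 0" shows "(x + y) ^ (2^i) = x ^ (2^i) + (y::'a) ^ (2^i)"
proof (induction i)
  case 0 then show ?case by simp
next
  case (Suc i)
  have "(x + y) ^ (2^Suc i) = ((x+y)^(2^i))^2" by (simp only: power_Suc2 power_mult)
  also have "\<dots> = (x^(2^i))^2 + (y^(2^i))^2" using Suc c2_sq[OF assms] by simp
  also have "\<dots> = x ^ (2^Suc i) + y ^ (2^Suc i)" by (simp only: power_Suc2 power_mult)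
  finally show ?case .
qed

lemma tr_add: assumes "(1::'a::field) + 1 = 0" shows "tr n (x + y) = tr n x + tr n (y::'a)"
  unfolding tr_def by (simp add: c2_pow2[OF assms] sum.distrib)

lemma c2_sum_sq: assumes "(1::'a::field) + 1 = 0" shows "(\<Sum>i\<in>A. f i) ^ 2 = (\<Sum>i\<in>A. (f i :: 'a) ^ 2)"
proof (induction A rule: infinite_finite_induct)
  case (insert x F) then show ?case by (simp add: c2_sq[OF assms])
qed auto

lemma tr_idem:
  assumes "(1::'a::field) + 1 = 0" and "x ^ (2^n) = (x::'a)"
  shows "tr n x ^ 2 = tr n x"
proof -
  have "tr n x ^ 2 = (\<Sum>i<n. x ^ (2 ^ Suc i))"
    unfolding tr_def c2_sum_sq[OF assms(1)] by (simp only: power_Suc2 power_mult)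
  also have "\<dots> = tr n x"
  proof -
    have "(\<Sum>i<Suc n. x ^ (2^i)) = x ^ (2^0) + (\<Sum>i<n. x ^ (2 ^ Suc i))"
      by (rule sum.lessThan_Suc_shift)
    moreover have "(\<Sum>i<Suc n. x ^ (2^i)) = (\<Sum>i<n. x ^ (2 ^ i)) + x ^ (2^n)" by simp
    ultimately show ?thesis using assms(2) unfolding tr_def by simp
  qed
  finally show ?thesis .
qed

lemma tr_01:
  assumes "n \<ge> 1" and "card (UNIV::'a set) = 2 ^ n"
  shows "tr n (x::'a::{field,finite}) = 0 \<or> tr n x = 1"
proof -
  have "tr n x ^ 2 = tr n x" using tr_idem[OF char2[OF assms]] fermat_field[of x] assms(2) by simp
  then have "tr n x * (tr n x - 1) = 0" by (simp add: power2_eq_square algebra_simps)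
  then show ?thesis by simp
qed

lemma tr_nonzero:
  assumes "n \<ge> 1" and "card (UNIV::'a set) = 2 ^ n"
  shows "\<exists>c::'a::{field,finite}. tr n c \<noteq> 0"
proof (rule ccontr)
  assume H: "\<not> ?thesis"
  define p :: "'a poly" where "p = (\<Sum>i<n. monom 1 (2^i))"
  have pv: "poly p x = tr n x" for x unfolding p_def tr_def by (simp add: poly_sum poly_monom)
  have inj: "(2::nat)^i = 2^(n-1) \<longleftrightarrow> i = n - 1" for i by simp
  have "coeff p (2^(n-1)) = (\<Sum>i<n. if i = n - 1 then 1 else 0)"
    unfolding p_def coeff_sum coeff_monom inj by simp
  also have "\<dots> = 1" using assms(1) by simp
  finally have "p \<noteq> 0" by auto
  have "degree p \<le> 2^(n-1)" unfolding p_def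
    by (rule degree_sum_le) (auto simp: degree_monom_eq)
  have "{x. poly p x = 0} = UNIV" using H pv by auto
  then have "card (UNIV::'a set) \<le> degree p" using card_poly_roots_bound[OF \<open>p \<noteq> 0\<close>] by simp
  also have "\<dots> < 2 ^ n"
  proof -
    have "(2::nat)^(n-1) < 2^n" using assms(1) by simp
    then show ?thesis using \<open>degree p \<le> 2^(n-1)\<close> by linarith
  qed
  finally show False using assms(2) by simp
qed

definition chi :: "nat \<Rightarrow> 'a::field \<Rightarrow> int" where
  "chi n x = (-1) ^ trbit n x"

lemma chi_add:
  assumes "n \<ge> 1" and "card (UNIV::'a set) = 2 ^ n"
  shows "chi n (x + y) = chi n x * chi n (y::'a::{field,finite})"
proof -
  have c: "(1::'a) + 1 = 0" by (rule char2[OF assms])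
  have t: "tr n (x+y) = tr n x + tr n y" by (rule tr_add[OF c])
  show ?thesis
    using tr_01[OF assms, of x] tr_01[OF assms, of y] t c
    unfolding chi_def trbit_def by auto
qed

lemma tr_zero: "tr n (0::'a::field) = 0"
  unfolding tr_def by (simp add: power_0_left)

lemma chi_zero: "chi n (0::'a::field) = 1"
  unfolding chi_def trbit_def by (simp add: tr_zero)

lemma chi_sum_zero:
  assumes "n \<ge> 1" and "card (UNIV::'a set) = 2 ^ n"
  shows "(\<Sum>v\<in>UNIV. chi n (v::'a::{field,finite})) = 0"
proof -
  obtain c :: 'a where c: "tr n c \<noteq> 0" using tr_nonzero[OF assms] by blast
  then have "tr n c = 1" using tr_01[OF assms, of c] by simp
  then have cc: "chi n c = -1" unfolding chi_def trbit_def by simp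
  have "(\<Sum>v\<in>UNIV. chi n (v::'a)) = (\<Sum>v\<in>UNIV. chi n (c + v))"
    by (rule sum_shift_add[symmetric])
  also have "\<dots> = - (\<Sum>v\<in>UNIV. chi n (v::'a))"
    by (simp add: chi_add[OF assms] cc sum_negf)
  finally show ?thesis by simp
qed

lemma chi_sum:
  assumes "n \<ge> 1" and "card (UNIV::'a set) = 2 ^ n"
  shows "(\<Sum>v\<in>UNIV. chi n (v * (d::'a::{field,finite}))) = (if d = 0 then int (card (UNIV::'a set)) else 0)"
proof (cases "d = 0")
  case True then show ?thesis by (simp add: chi_zero)
next
  case False
  then show ?thesis using sum_scale_mult[OF False, of "chi n"] chi_sum_zero[OF assms] by simp
qed

lemma walsh_eq:
  assumes "n \<ge> 1" and "card (UNIV::'a set) = 2 ^ n"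
  shows "walsh n F (b * v) v = (\<Sum>x\<in>UNIV. chi n (v * (F x + b * (x::'a::{field,finite}))))"
  unfolding walsh_def
proof (rule sum.cong[OF refl])
  fix x
  have "v * (F x + b * x) = v * F x + b * v * x" by (simp add: algebra_simps)
  then have "chi n (v * (F x + b * x)) = chi n (v * F x) * chi n (b * v * x)"
    by (simp add: chi_add[OF assms])
  then show "(-1) ^ (trbit n (v * F x) + trbit n (b * v * x)) = chi n (v * (F x + b * x))"
    unfolding chi_def by (simp add: power_add)
qed

lemma swap2: "(\<Sum>v\<in>A. \<Sum>x\<in>B. \<Sum>y\<in>C. f v x y) = (\<Sum>x\<in>B. \<Sum>y\<in>C. \<Sum>v\<in>A. f v x y)"
proof -
  have "(\<Sum>v\<in>A. \<Sum>x\<in>B. \<Sum>y\<in>C. f v x y) = (\<Sum>x\<in>B. \<Sum>v\<in>A. \<Sum>y\<in>C. f v x y)"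
    by (rule sum.swap)
  also have "\<dots> = (\<Sum>x\<in>B. \<Sum>y\<in>C. \<Sum>v\<in>A. f v x y)"
    by (rule sum.cong[OF refl], rule sum.swap)
  finally show ?thesis .
qed

lemma swap3: "(\<Sum>v\<in>A. \<Sum>x\<in>B. \<Sum>y\<in>C. \<Sum>z\<in>D. f v x y z) = (\<Sum>x\<in>B. \<Sum>y\<in>C. \<Sum>z\<in>D. \<Sum>v\<in>A. f v x y z)"
proof -
  have "(\<Sum>v\<in>A. \<Sum>x\<in>B. \<Sum>y\<in>C. \<Sum>z\<in>D. f v x y z) = (\<Sum>x\<in>B. \<Sum>v\<in>A. \<Sum>y\<in>C. \<Sum>z\<in>D. f v x y z)"
    by (rule sum.swap)
  also have "\<dots> = (\<Sum>x\<in>B. \<Sum>y\<in>C. \<Sum>z\<in>D. \<Sum>v\<in>A. f v x y z)"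
    by (rule sum.cong[OF refl], rule swap2)
  finally show ?thesis .
qed

lemma c2_eq0: assumes "(1::'a::field) + 1 = 0" shows "a + b = 0 \<longleftrightarrow> b = (a::'a)"
  using c2_double[OF assms, of a] by (metis add_left_cancel)

lemma c2_eq0': assumes "(1::'a::field) + 1 = 0" shows "a + b = 0 \<longleftrightarrow> a = (b::'a)"
  using c2_eq0[OF assms] by metis

lemma sum_if_card: "(\<Sum>y\<in>(UNIV::'a::finite set). if P y then (c::int) else 0) = c * int (card {y. P y})"
  by (simp add: sum.If_cases)

lemma triple_prod:
  "(\<Sum>x\<in>A. f x) * (\<Sum>y\<in>B. g y) * (\<Sum>z\<in>C. h z) = (\<Sum>x\<in>A. \<Sum>y\<in>B. \<Sum>z\<in>C. f x * g y * (h z :: int))"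
proof -
  have "(\<Sum>x\<in>A. f x) * (\<Sum>y\<in>B. g y) = (\<Sum>x\<in>A. \<Sum>y\<in>B. f x * g y)" by (rule sum_product)
  then have "(\<Sum>x\<in>A. f x) * (\<Sum>y\<in>B. g y) * (\<Sum>z\<in>C. h z) = (\<Sum>x\<in>A. \<Sum>y\<in>B. f x * g y * (\<Sum>z\<in>C. h z))"
    by (simp add: sum_distrib_right)
  then show ?thesis by (simp add: sum_distrib_left)
qed

lemma walsh_sq:
  assumes "n \<ge> 1" and "card (UNIV::'a set) = 2 ^ n"
  shows "(\<Sum>v\<in>UNIV. (walsh n F (b * v) v)^2) =
    int (card (UNIV::'a set)) * int (\<Sum>x\<in>UNIV. card {y. F y + b*y = F x + b*(x::'a::{field,finite})})"
proof -
  have c: "(1::'a) + 1 = 0" by (rule char2[OF assms])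
  define G where "G x = F x + b * x" for x
  define q where "q = int (card (UNIV::'a set))"
  have "(\<Sum>v\<in>UNIV. (walsh n F (b * v) v)^2) = (\<Sum>v\<in>UNIV. (\<Sum>x\<in>UNIV. chi n (v * G x))^2)"
    by (simp add: walsh_eq[OF assms] G_def)
  also have "\<dots> = (\<Sum>v\<in>UNIV. \<Sum>x\<in>UNIV. \<Sum>y\<in>UNIV. chi n (v * (G x + G y)))"
    by (simp add: power2_eq_square sum_product chi_add[OF assms] distrib_left)
  also have "\<dots> = (\<Sum>x\<in>UNIV. \<Sum>y\<in>UNIV. \<Sum>v\<in>UNIV. chi n (v * (G x + G y)))"
    by (rule swap2)
  also have "\<dots> = (\<Sum>x\<in>UNIV. \<Sum>y\<in>UNIV. if G y = G x then q else 0)"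
    unfolding q_def by (simp add: chi_sum[OF assms] c2_eq0[OF c])
  also have "\<dots> = (\<Sum>x\<in>UNIV. q * int (card {y. G y = G x}))"
    by (simp add: sum_if_card)
  also have "\<dots> = q * int (\<Sum>x\<in>UNIV. card {y. G y = G x})"
    by (simp add: sum_distrib_left)
  finally show ?thesis by (simp add: G_def q_def)
qed

lemma walsh_cube:
  assumes "n \<ge> 1" and "card (UNIV::'a set) = 2 ^ n"
  shows "(\<Sum>v1\<in>UNIV. \<Sum>v2\<in>UNIV.
          walsh n F (b * v1) v1 * walsh n F (b * v2) v2 * walsh n F (b * (v1 + v2)) (v1 + v2)) =
    int (card (UNIV::'a set))^2 * int (\<Sum>x\<in>UNIV. (card {y. F y + b*y = F x + b*(x::'a::{field,finite})})^2)"
proof -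
  have c: "(1::'a) + 1 = 0" by (rule char2[OF assms])
  define G where "G x = F x + b * x" for x
  define q where "q = int (card (UNIV::'a set))"
  define m where "m z = int (card {y. G y = G z})" for z
  have "(\<Sum>v1\<in>UNIV. \<Sum>v2\<in>UNIV.
          walsh n F (b * v1) v1 * walsh n F (b * v2) v2 * walsh n F (b * (v1 + v2)) (v1 + v2)) =
     (\<Sum>v1\<in>UNIV. \<Sum>v2\<in>UNIV. (\<Sum>x\<in>UNIV. chi n (v1 * G x)) * (\<Sum>y\<in>UNIV. chi n (v2 * G y))
        * (\<Sum>z\<in>UNIV. chi n ((v1 + v2) * G z)))"
    by (simp add: walsh_eq[OF assms] G_def)
  also have "\<dots> = (\<Sum>v1\<in>UNIV. \<Sum>v2\<in>UNIV. \<Sum>x\<in>UNIV. \<Sum>y\<in>UNIV. \<Sum>z\<in>UNIV.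
        chi n (v1 * (G x + G z)) * chi n (v2 * (G y + G z)))"
  proof -
    have e: "chi n (v1 * G x) * chi n (v2 * G y) * chi n ((v1 + v2) * G z) =
        chi n (v1 * (G x + G z)) * chi n (v2 * (G y + G z))" for v1 v2 x y z
    proof -
      have "v1 * (G x + G z) = v1 * G x + v1 * G z" "v2 * (G y + G z) = v2 * G y + v2 * G z"
        "(v1 + v2) * G z = v1 * G z + v2 * G z" by (simp_all add: algebra_simps)
      then show ?thesis by (simp add: chi_add[OF assms])
    qed
    show ?thesis by (simp add: triple_prod e)
  qed
  also have "\<dots> = (\<Sum>v1\<in>UNIV. \<Sum>x\<in>UNIV. \<Sum>y\<in>UNIV. \<Sum>z\<in>UNIV. \<Sum>v2\<in>UNIV.
        chi n (v1 * (G x + G z)) * chi n (v2 * (G y + G z)))"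
    by (rule sum.cong[OF refl], rule swap3)
  also have "\<dots> = (\<Sum>x\<in>UNIV. \<Sum>y\<in>UNIV. \<Sum>z\<in>UNIV. \<Sum>v1\<in>UNIV. \<Sum>v2\<in>UNIV.
        chi n (v1 * (G x + G z)) * chi n (v2 * (G y + G z)))"
    by (rule swap3)
  also have "\<dots> = (\<Sum>x\<in>UNIV. \<Sum>y\<in>UNIV. \<Sum>z\<in>UNIV.
        (\<Sum>v1\<in>UNIV. chi n (v1 * (G x + G z))) * (\<Sum>v2\<in>UNIV. chi n (v2 * (G y + G z))))"
    by (simp add: sum_product)
  also have "\<dots> = (\<Sum>x\<in>UNIV. \<Sum>y\<in>UNIV. \<Sum>z\<in>UNIV.
        (if G x = G z then q else 0) * (if G y = G z then q else 0))"
    unfolding q_def by (simp add: chi_sum[OF assms] c2_eq0'[OF c])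
  also have "\<dots> = (\<Sum>z\<in>UNIV. \<Sum>x\<in>UNIV. \<Sum>y\<in>UNIV.
        (if G x = G z then q else 0) * (if G y = G z then q else 0))"
    by (rule swap2[symmetric])
  also have "\<dots> = (\<Sum>z\<in>UNIV. (q * m z) * (q * m z))"
    by (simp add: sum_product[symmetric] sum_if_card m_def)
  also have "\<dots> = q^2 * (\<Sum>z\<in>UNIV. (m z)^2)"
    by (simp add: sum_distrib_left power2_eq_square algebra_simps)
  finally show ?thesis by (simp add: G_def q_def m_def)
qed

lemma slope_iff:
  assumes c: "(1::'a::field) + 1 = 0" and "y \<noteq> x"
  shows "F y + b*y = F x + b*x \<longleftrightarrow> b = (F y + F x) / (y + (x::'a))"
proof -
  have yx: "y + x \<noteq> 0" using assms c2_eq0'[OF c, of y x] by simp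
  have "F y + b*y = F x + b*x \<longleftrightarrow> (F y + b*y) + (F x + b*x) = 0" by (simp add: c2_eq0'[OF c])
  also have "\<dots> \<longleftrightarrow> (F y + F x) + b*(y+x) = 0" by (simp add: algebra_simps)
  also have "\<dots> \<longleftrightarrow> b*(y+x) = F y + F x" by (simp add: c2_eq0[OF c])
  also have "\<dots> \<longleftrightarrow> b = (F y + F x) / (y + x)" using yx by (simp add: field_simps)
  finally show ?thesis .
qed

lemma card_if_nat: "card {y\<in>A. P y} = (\<Sum>y\<in>A. if P y then 1 else (0::nat))" if "finite A"
  using that by (simp add: sum.If_cases Int_def)

lemma card_if_nat2: "card {y. P y} = (\<Sum>y\<in>(UNIV::'a::finite set). if P y then 1 else (0::nat))"
  using card_if_nat[of "UNIV::'a set" P] by simp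

lemma slope_count:
  assumes c: "(1::'a::{field,finite}) + 1 = 0"
  shows "(\<Sum>b\<in>UNIV-{0}. card {y. F y + b*y = F x + b*(x::'a)}) =
     (card (UNIV::'a set) - 1) + card {y. y \<noteq> x \<and> F y \<noteq> F x}"
proof -
  have "(\<Sum>b\<in>UNIV-{0}. card {y. F y + b*y = F x + b*x}) =
     (\<Sum>b\<in>UNIV-{0}. \<Sum>y\<in>UNIV. if F y + b*y = F x + b*x then 1 else (0::nat))"
    by (simp only: card_if_nat2)
  also have "\<dots> = (\<Sum>y\<in>UNIV. \<Sum>b\<in>UNIV-{0}. if F y + b*y = F x + b*x then 1 else (0::nat))"
    by (rule sum.swap)
  also have "\<dots> = (\<Sum>y\<in>UNIV. card {b\<in>UNIV-{0}. F y + b*y = F x + b*x})"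
    by (rule sum.cong[OF refl], rule card_if_nat[symmetric]) simp
  also have "\<dots> = (\<Sum>y\<in>UNIV. if y = x then card (UNIV::'a set) - 1 else (if F y \<noteq> F x then 1 else 0))"
  proof (rule sum.cong[OF refl])
    fix y
    show "card {b\<in>UNIV-{0}. F y + b*y = F x + b*x} = (if y = x then card (UNIV::'a set) - 1 else (if F y \<noteq> F x then 1 else 0))"
    proof (cases "y = x")
      case True
      then have "{b\<in>UNIV-{0}. F y + b*y = F x + b*x} = UNIV - {0}" by auto
      then show ?thesis using True by (simp add: card_Diff_singleton)
    next
      case False
      have "{b\<in>UNIV-{0}. F y + b*y = F x + b*x} = {b. b \<noteq> 0 \<and> b = (F y + F x) / (y + x)}"
        using slope_iff[OF c False] by auto
      also have "\<dots> = (if F y \<noteq> F x then {(F y + F x) / (y + x)} else {})"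
        using False c2_eq0'[OF c] c2_double[OF c] by auto
      finally show ?thesis using False by simp
    qed
  qed
  also have "\<dots> = (card (UNIV::'a set) - 1) + (\<Sum>y\<in>UNIV-{x}. if F y \<noteq> F x then 1 else 0)"
    by (simp add: sum.remove[of UNIV x])
  also have "\<dots> = (card (UNIV::'a set) - 1) + card {y. y \<noteq> x \<and> F y \<noteq> F x}"
  proof -
    have "{y\<in>UNIV-{x}. F y \<noteq> F x} = {y. y \<noteq> x \<and> F y \<noteq> F x}" by auto
    then show ?thesis using card_if_nat[of "UNIV-{x}" "\<lambda>y. F y \<noteq> F x"] by simp
  qed
  finally show ?thesis .
qed

definition NC :: "('a::field \<Rightarrow> 'a) \<Rightarrow> bool" where
  "NC F \<longleftrightarrow> (\<forall>b. b \<noteq> 0 \<longrightarrow> (\<forall>s t u. s \<noteq> t \<and> s \<noteq> u \<and> t \<noteq> u \<longrightarrow>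
      \<not> (F s + b*s = F t + b*t \<and> F s + b*s = F u + b*u)))"

lemma det_aff:
  assumes c: "(1::'a::field) + 1 = 0"
  shows "det3 (1,s,a) (1,t,e) (1,u,d) = (t+s)*(d+a) + (u+s)*(e+(a::'a))"
proof -
  have "det3 (1,s,a) (1,t,e) (1,u,d) = t*d + e*u + s*d + s*e + a*u + a*t"
    unfolding det3_def by (simp add: c2_minus[OF c] c2_uminus[OF c] algebra_simps)
  also have "\<dots> = t*d + e*u + s*d + s*e + a*u + a*t + (s*a + s*a)" by (simp only: c2_double[OF c] add_0_right)
  also have "\<dots> = (t+s)*(d+a) + (u+s)*(e+a)" by (simp add: algebra_simps)
  finally show ?thesis .
qed

lemma aff3_nz:
  fixes F :: "'a::field \<Rightarrow> 'a"
  assumes c: "(1::'a) + 1 = 0" and inj: "inj F" and nc: "NC F"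
    and d: "s \<noteq> t" "s \<noteq> u" "t \<noteq> (u::'a)"
  shows "det3 (1,s,F s) (1,t,F t) (1,u,F u) \<noteq> 0"
proof
  assume "det3 (1,s,F s) (1,t,F t) (1,u,F u) = 0"
  then have D: "(t+s)*(F u + F s) = (u+s)*(F t + F s)"
    unfolding det_aff[OF c] by (simp add: c2_eq0'[OF c])
  have ts: "t + s \<noteq> 0" and us: "u + s \<noteq> 0" using d c2_eq0'[OF c] by auto
  define b where "b = (F t + F s) / (t + s)"
  have "F t \<noteq> F s" using inj d by (auto dest: injD)
  then have "F t + F s \<noteq> 0" using c2_eq0'[OF c] by simp
  then have b0: "b \<noteq> 0" using ts by (simp add: b_def)
  have e1: "F t + b*t = F s + b*s" using slope_iff[OF c, of t s F b] d by (simp add: b_def)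
  have "b = (F u + F s) / (u + s)" using D ts us unfolding b_def by (simp add: field_simps)
  then have e2: "F u + b*u = F s + b*s" using slope_iff[OF c, of u s F b] d by simp
  show False using nc b0 d e1 e2 unfolding NC_def by metis
qed

lemma pp_self: "p \<in> proj_point p"
  unfolding proj_point_def by (cases p) force

lemma pp_eq_imp: "proj_point p = proj_point q \<Longrightarrow> \<exists>c. c \<noteq> 0 \<and> p = (c * fst q, c * fst (snd q), c * snd (snd q))"
  using pp_self[of p] unfolding proj_point_def by auto

definition SF :: "('a::field \<Rightarrow> 'a) \<Rightarrow> ('a \<times> 'a \<times> 'a) set" where
  "SF F = (\<lambda>t. (1, t, F t)) ` UNIV \<union> {(0,1,0), (0,0,1)}"

lemma pp_inj: "inj_on proj_point (SF F)"
proof (rule inj_onI)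
  fix p q assume p: "p \<in> SF F" and q: "q \<in> SF F" and e: "proj_point p = proj_point q"
  obtain c where c: "c \<noteq> 0" "p = (c * fst q, c * fst (snd q), c * snd (snd q))" using pp_eq_imp[OF e] by blast
  show "p = q" using p q c unfolding SF_def by auto
qed

lemma card_SF: "card (SF (F::'a::{field,finite} \<Rightarrow> 'a)) = card (UNIV::'a set) + 2"
proof -
  have i: "inj (\<lambda>t::'a. (1::'a, t, F t))" by (rule injI) simp
  have "card ((\<lambda>t. (1::'a, t, F t)) ` UNIV) = card (UNIV::'a set)" using card_image[OF i] by simp
  moreover have "(\<lambda>t. (1::'a, t, F t)) ` UNIV \<inter> {(0,1,0), (0,0,1)} = {}" by auto
  ultimately show ?thesis unfolding SF_def by (simp add: card_Un_disjoint)
qed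

lemma hyperoval_SF:
  "o_polynomial (F::'a::{field,finite} \<Rightarrow> 'a) \<longleftrightarrow>
    (\<forall>p\<in>SF F. \<forall>q\<in>SF F. \<forall>r\<in>SF F. p \<noteq> q \<and> p \<noteq> r \<and> q \<noteq> r \<longrightarrow> det3 p q r \<noteq> 0)"
proof -
  have z: "(0,0,0) \<notin> SF F" unfolding SF_def by auto
  have cd: "card (proj_point ` SF F) = card (UNIV::'a set) + 2"
    using card_image[OF pp_inj[of F]] card_SF[of F] by simp
  have eq: "proj_point p = proj_point q \<longleftrightarrow> p = q" if "p \<in> SF F" "q \<in> SF F" for p q
    using pp_inj[of F] that by (auto dest: inj_onD)
  show ?thesis unfolding o_polynomial_def hyperoval_def SF_def[symmetric] using z cd eq by auto
qed

lemma det_cond_back: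
  fixes F :: "'a::field \<Rightarrow> 'a"
  assumes c: "(1::'a::field) + 1 = 0" and inj: "inj F" and nc: "NC F"
  shows "\<forall>p\<in>SF F. \<forall>q\<in>SF F. \<forall>r\<in>SF F. p \<noteq> q \<and> p \<noteq> r \<and> q \<noteq> r \<longrightarrow> det3 p q r \<noteq> 0"
  using aff3_nz[OF c inj nc] apply (auto simp: SF_def)
  apply (auto simp: det3_def c2_minus[OF c] c2_uminus[OF c] c2_eq0'[OF c] inj_eq[OF inj])
  done

lemma det_cond_fwd:
  fixes F :: "'a::field \<Rightarrow> 'a"
  assumes c: "(1::'a) + 1 = 0"
    and H: "\<forall>p\<in>SF F. \<forall>q\<in>SF F. \<forall>r\<in>SF F. p \<noteq> q \<and> p \<noteq> r \<and> q \<noteq> r \<longrightarrow> det3 p q r \<noteq> 0"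
  shows "inj F \<and> NC F"
proof
  have mem: "(1, t, F t) \<in> SF F" for t unfolding SF_def by auto
  have e1: "(0,1,0) \<in> SF F" unfolding SF_def by auto
  show "inj F"
  proof (rule injI, rule ccontr)
    fix s t assume st: "F s = F t" "s \<noteq> t"
    have dd: "(1::'a,s,F s) \<noteq> (1,t,F t)" "(1::'a,s,F s) \<noteq> (0,1,0)" "(1::'a,t,F t) \<noteq> (0,1,0)" using st by auto
    have "det3 (1,s,F s) (1,t,F t) (0,1,0) \<noteq> 0" using H[rule_format, OF mem[of s] mem[of t] e1] dd by simp
    then show False using st by (simp add: det3_def)
  qed
  show "NC F" unfolding NC_def
  proof (intro allI impI notI)
    fix b s t u assume b: "b \<noteq> 0" and d: "s \<noteq> t \<and> s \<noteq> u \<and> t \<noteq> u"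
      and g: "F s + b*s = F t + b*t \<and> F s + b*s = F u + b*u"
    have "F t + b*t = F s + b*s" using g by simp
    then have "b = (F t + F s)/(t + s)" using slope_iff[OF c, of t s F b] d by auto
    moreover have ts: "t + s \<noteq> 0" using d c2_eq0'[OF c] by auto
    ultimately have 1: "F t + F s = b * (t + s)" by simp
    have "F u + b*u = F s + b*s" using g by metis
    then have "b = (F u + F s)/(u + s)" using slope_iff[OF c, of u s F b] d by auto
    moreover have us: "u + s \<noteq> 0" using d c2_eq0'[OF c] by auto
    ultimately have 2: "F u + F s = b * (u + s)" by simp
    have "det3 (1,s,F s) (1,t,F t) (1,u,F u) = (t+s)*(b*(u+s)) + (u+s)*(b*(t+s))"
      unfolding det_aff[OF c] 1 2 ..
    also have "\<dots> = 0" using c2_double[OF c, of "(t+s)*(b*(u+s))"] by (simp add: algebra_simps)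
    finally have "det3 (1,s,F s) (1,t,F t) (1,u,F u) = 0" .
    moreover have "det3 (1,s,F s) (1,t,F t) (1,u,F u) \<noteq> 0"
    proof -
      have dd: "(1::'a,s,F s) \<noteq> (1,t,F t)" "(1::'a,s,F s) \<noteq> (1,u,F u)" "(1::'a,t,F t) \<noteq> (1,u,F u)" using d by simp_all
      then show ?thesis using H[rule_format, OF mem[of s] mem[of t] mem[of u]] by simp
    qed
    ultimately show False by simp
  qed
qed

lemma opoly_iff:
  fixes F :: "'a::{field,finite} \<Rightarrow> 'a"
  assumes c: "(1::'a) + 1 = 0"
  shows "o_polynomial F \<longleftrightarrow> inj F \<and> NC F"
  using hyperoval_SF[of F] det_cond_fwd[OF c] det_cond_back[OF c] by blast

lemma le2_of_NC:
  fixes F :: "'a::{field,finite} \<Rightarrow> 'a"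
  assumes nc: "NC F" and b: "b \<noteq> 0"
  shows "card {y. F y + b*y = F x + b*x} \<le> 2"
proof (rule ccontr)
  assume "\<not> ?thesis"
  then have "3 \<le> card {y. F y + b*y = F x + b*x}" by simp
  then obtain B where B: "B \<subseteq> {y. F y + b*y = F x + b*x}" "card B = 3"
    by (meson obtain_subset_with_card_n)
  then obtain s t u where "B = {s,t,u}" "s \<noteq> t" "t \<noteq> u" "s \<noteq> u"
    unfolding card_3_iff by blast
  then have "s \<noteq> t \<and> s \<noteq> u \<and> t \<noteq> u" "F s + b*s = F t + b*t \<and> F s + b*s = F u + b*u"
    using B(1) by auto
  then show False using nc b unfolding NC_def by blast
qed

lemma NC_of_le2:
  fixes F :: "'a::{field,finite} \<Rightarrow> 'a"
  assumes H: "\<And>b x. b \<noteq> 0 \<Longrightarrow> card {y. F y + b*y = F x + b*x} \<le> 2"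
  shows "NC F"
  unfolding NC_def
proof (intro allI impI notI)
  fix b s t u assume b: "b \<noteq> 0" and d: "s \<noteq> t \<and> s \<noteq> u \<and> t \<noteq> u"
    and g: "F s + b*s = F t + b*t \<and> F s + b*s = F u + b*u"
  have "{s,t,u} \<subseteq> {y. F y + b*y = F s + b*s}" using g by auto
  then have "card {s,t,u} \<le> card {y. F y + b*y = F s + b*s}" by (rule card_mono[rotated]) simp
  moreover have "card {s,t,u} = 3" using d by simp
  ultimately show False using H[OF b, of s] by simp
qed

lemma cx_le:
  fixes F :: "'a::finite \<Rightarrow> 'b"
  shows "card {y. y \<noteq> x \<and> F y \<noteq> F x} \<le> card (UNIV::'a set) - 1"
proof -
  have "card {y. y \<noteq> x \<and> F y \<noteq> F x} \<le> card (UNIV - {x})" by (rule card_mono) auto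
  then show ?thesis by (simp add: card_Diff_singleton)
qed

lemma cx_inj:
  fixes F :: "'a::finite \<Rightarrow> 'b"
  shows "inj F \<Longrightarrow> card {y. y \<noteq> x \<and> F y \<noteq> F x} = card (UNIV::'a set) - 1"
proof -
  assume "inj F"
  then have "{y. y \<noteq> x \<and> F y \<noteq> F x} = UNIV - {x}" by (auto dest: injD)
  then show ?thesis by (simp add: card_Diff_singleton)
qed

lemma inj_cx: 
  fixes F :: "'a::finite \<Rightarrow> 'b"
  assumes "\<And>x. card {y. y \<noteq> x \<and> F y \<noteq> F x} = card (UNIV::'a set) - 1"
  shows "inj F"
proof (rule injI, rule ccontr)
  fix x y assume e: "F x = F y" and ne: "x \<noteq> y"
  have "{z. z \<noteq> x \<and> F z \<noteq> F x} \<subseteq> UNIV - {x}" by auto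
  moreover have "card {z. z \<noteq> x \<and> F z \<noteq> F x} = card (UNIV - {x})"
    using assms[of x] by (simp add: card_Diff_singleton)
  ultimately have "{z. z \<noteq> x \<and> F z \<noteq> F x} = UNIV - {x}" by (intro card_subset_eq) auto
  then show False using e ne by auto
qed

theorem mainTheorem7:
  fixes F :: "'a::{field,finite} \<Rightarrow> 'a" and n :: nat
  assumes "n \<ge> 1" and "card (UNIV :: 'a set) = 2 ^ n"
  shows "o_polynomial F \<longleftrightarrow>
    ((\<Sum>b\<in>UNIV - {0}. \<Sum>v\<in>UNIV. (walsh n F (b * v) v) ^ 2) = (2 ^ n - 1) * 2 ^ (2 * n + 1)
     \<and> (\<Sum>b\<in>UNIV - {0}. \<Sum>v1\<in>UNIV. \<Sum>v2\<in>UNIV.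
          walsh n F (b * v1) v1 * walsh n F (b * v2) v2 * walsh n F (b * (v1 + v2)) (v1 + v2))
        = (2 ^ n - 1) * 2 ^ (3 * n + 2))"
proof -
  have c: "(1::'a) + 1 = 0" by (rule char2[OF assms])
  define q where "q = card (UNIV::'a set)"
  define m where "m b x = card {y. F y + b*y = F x + b*x}" for b x
  define SP where "SP = (\<Sum>b\<in>UNIV-{0::'a}. \<Sum>x\<in>UNIV. m b x)"
  define ST where "ST = (\<Sum>b\<in>UNIV-{0::'a}. \<Sum>x\<in>UNIV. (m b x)^2)"
  have q1: "q \<ge> 1" unfolding q_def by (simp add: Suc_leI finite_UNIV_card_ge_0)
  have qpos: "int q > 0" using q1 by simp
  have cq: "card (UNIV - {0::'a}) = q - 1" unfolding q_def by (simp add: card_Diff_singleton)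
  have E1: "(\<Sum>b\<in>UNIV - {0}. \<Sum>v\<in>UNIV. (walsh n F (b * v) v) ^ 2) = int q * int SP"
    unfolding SP_def q_def m_def by (simp add: walsh_sq[OF assms] sum_distrib_left of_nat_sum)
  have E2: "(\<Sum>b\<in>UNIV - {0}. \<Sum>v1\<in>UNIV. \<Sum>v2\<in>UNIV.
          walsh n F (b * v1) v1 * walsh n F (b * v2) v2 * walsh n F (b * (v1 + v2)) (v1 + v2))
        = int q ^ 2 * int ST"
    unfolding ST_def q_def m_def by (simp add: walsh_cube[OF assms] sum_distrib_left of_nat_sum)
  have qn: "int q = 2 ^ n" unfolding q_def using assms(2) by simp
  have R1: "(2 ^ n - 1) * 2 ^ (2 * n + 1) = int q * (2 * int q * (int q - 1))"
  proof -
    have "(2::int) ^ (2 * n) = (2^n)^2" by (rule power_even_eq)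
    then have "(2::int) ^ (2 * n + 1) = 2^n * 2^n * 2" by (simp add: power2_eq_square)
    then show ?thesis unfolding qn by (simp add: algebra_simps)
  qed
  have R2: "(2 ^ n - 1) * 2 ^ (3 * n + 2) = int q ^ 2 * (4 * int q * (int q - 1))"
  proof -
    have "(2::int) ^ (3 * n) = (2^n)^3" by (metis power_mult mult.commute)
    then have "(2::int) ^ (3 * n + 2) = 2^n * 2^n * 2^n * 4" by (simp add: power3_eq_cube)
    then show ?thesis unfolding qn by (simp add: algebra_simps power2_eq_square)
  qed
  have C1: "((\<Sum>b\<in>UNIV - {0}. \<Sum>v\<in>UNIV. (walsh n F (b * v) v) ^ 2) = (2 ^ n - 1) * 2 ^ (2 * n + 1))
      \<longleftrightarrow> int SP = 2 * int q * (int q - 1)"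
    unfolding E1 R1 using qpos by simp
  have C2: "((\<Sum>b\<in>UNIV - {0}. \<Sum>v1\<in>UNIV. \<Sum>v2\<in>UNIV.
          walsh n F (b * v1) v1 * walsh n F (b * v2) v2 * walsh n F (b * (v1 + v2)) (v1 + v2))
        = (2 ^ n - 1) * 2 ^ (3 * n + 2)) \<longleftrightarrow> int ST = 4 * int q * (int q - 1)"
    unfolding E2 R2 using qpos by simp
  have K: "(\<Sum>b\<in>UNIV-{0}. m b x) = (q - 1) + card {y. y \<noteq> x \<and> F y \<noteq> F x}" for x
    unfolding m_def q_def by (rule slope_count[OF c])
  have SPs: "SP = (\<Sum>x\<in>UNIV. \<Sum>b\<in>UNIV-{0}. m b x)" unfolding SP_def by (rule sum.swap)
  show ?thesis
    unfolding C1 C2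
  proof
    assume "o_polynomial F"
    then have inj: "inj F" and nc: "NC F" using opoly_iff[OF c] by auto
    have "SP = (\<Sum>x\<in>(UNIV::'a set). (q - 1) + (q - 1))"
      unfolding SPs K using cx_inj[OF inj] q_def by simp
    also have "\<dots> = q * (2 * (q - 1))" using q_def by simp
    finally have SPv: "int SP = 2 * int q * (int q - 1)" using q1 by (simp add: of_nat_diff)
    have m12: "int ((m b x)^2) = 3 * int (m b x) - 2" if "b \<noteq> 0" for b x
    proof -
      have "m b x \<le> 2" unfolding m_def by (rule le2_of_NC[OF nc that])
      moreover have "m b x \<ge> 1"
      proof -
        have "x \<in> {y. F y + b*y = F x + b*x}" by simp
        then have "{y. F y + b*y = F x + b*x} \<noteq> {}" by blast
        then show ?thesis unfolding m_def by (simp add: card_gt_0_iff Suc_le_eq)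
      qed
      ultimately have "m b x = 1 \<or> m b x = 2" by auto
      then show ?thesis by auto
    qed
    have "int ST = (\<Sum>b\<in>UNIV-{0::'a}. \<Sum>x\<in>UNIV. int ((m b x)^2))" unfolding ST_def by (simp add: of_nat_sum)
    also have "\<dots> = (\<Sum>b\<in>UNIV-{0::'a}. \<Sum>x\<in>UNIV. 3 * int (m b x) - 2)"
      by (rule sum.cong[OF refl], rule sum.cong[OF refl], rule m12) auto
    also have "\<dots> = 3 * int SP - 2 * int q * (int q - 1)"
    proof -
      have a: "(\<Sum>b\<in>UNIV-{0::'a}. \<Sum>x\<in>UNIV. 3 * int (m b x) - 2) =
          3 * (\<Sum>b\<in>UNIV-{0::'a}. \<Sum>x\<in>UNIV. int (m b x)) - (\<Sum>b\<in>UNIV-{0::'a}. \<Sum>x\<in>(UNIV::'a set). (2::int))"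
        by (simp add: sum_subtractf sum_distrib_left)
      have b: "(\<Sum>b\<in>UNIV-{0::'a}. \<Sum>x\<in>(UNIV::'a set). (2::int)) = 2 * int q * (int q - 1)"
        using cq q1 q_def by (simp add: of_nat_diff)
      have d: "(\<Sum>b\<in>UNIV-{0::'a}. \<Sum>x\<in>UNIV. int (m b x)) = int SP" by (simp add: SP_def of_nat_sum)
      show ?thesis using a b d by simp
    qed
    finally show "int SP = 2 * int q * (int q - 1) \<and> int ST = 4 * int q * (int q - 1)"
      using SPv by simp
  next
    assume H: "int SP = 2 * int q * (int q - 1) \<and> int ST = 4 * int q * (int q - 1)"
    have "(\<Sum>b\<in>UNIV-{0::'a}. \<Sum>x\<in>UNIV. (int (m b x) - 2)^2) =
        (\<Sum>b\<in>UNIV-{0::'a}. \<Sum>x\<in>UNIV. int ((m b x)^2)) - 4 * (\<Sum>b\<in>UNIV-{0::'a}. \<Sum>x\<in>UNIV. int (m b x))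
         + 4 * int q * (int q - 1)"
    proof -
      have "(\<Sum>b\<in>UNIV-{0::'a}. \<Sum>x\<in>UNIV. (int (m b x) - 2)^2) =
          (\<Sum>b\<in>UNIV-{0::'a}. \<Sum>x\<in>UNIV. (int ((m b x)^2) - 4 * int (m b x)) + 4)"
        by (rule sum.cong[OF refl], rule sum.cong[OF refl]) (simp add: power2_eq_square algebra_simps)
      also have "\<dots> = (\<Sum>b\<in>UNIV-{0::'a}. \<Sum>x\<in>UNIV. int ((m b x)^2)) - 4 * (\<Sum>b\<in>UNIV-{0::'a}. \<Sum>x\<in>UNIV. int (m b x))
         + (\<Sum>b\<in>UNIV-{0::'a}. \<Sum>x\<in>(UNIV::'a set). (4::int))"
        by (simp add: sum.distrib sum_subtractf sum_distrib_left)
      also have "(\<Sum>b\<in>UNIV-{0::'a}. \<Sum>x\<in>(UNIV::'a set). (4::int)) = 4 * int q * (int q - 1)"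
        using cq q1 q_def by (simp add: of_nat_diff)
      finally show ?thesis .
    qed
    also have "\<dots> = int ST - 4 * int SP + 4 * int q * (int q - 1)"
      unfolding ST_def SP_def by (simp add: of_nat_sum)
    also have "\<dots> = 0" using H by simp
    finally have Z: "(\<Sum>b\<in>UNIV-{0::'a}. \<Sum>x\<in>UNIV. (int (m b x) - 2)^2) = 0" .
    have m2: "m b x = 2" if "b \<noteq> 0" for b x
    proof -
      have "(\<Sum>x\<in>UNIV. (int (m b x) - 2)^2) = 0"
        using Z sum_nonneg_eq_0_iff[of "UNIV-{0::'a}" "\<lambda>b. \<Sum>x\<in>UNIV. (int (m b x) - 2)^2"] that
        by (simp add: sum_nonneg)
      then have "(int (m b x) - 2)^2 = 0"
        using sum_nonneg_eq_0_iff[of "UNIV::'a set" "\<lambda>x. (int (m b x) - 2)^2"] by simp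
      then show ?thesis by simp
    qed
    have nc: "NC F" by (rule NC_of_le2) (simp add: m2[unfolded m_def])
    have inj: "inj F"
    proof (rule inj_cx)
      fix x
      have "(\<Sum>b\<in>UNIV-{0}. m b x) = (\<Sum>b\<in>UNIV-{0::'a}. 2)" by (rule sum.cong) (auto simp: m2)
      then have "(q - 1) + card {y. y \<noteq> x \<and> F y \<noteq> F x} = 2 * (q - 1)" using K[of x] cq by simp
      then show "card {y. y \<noteq> x \<and> F y \<noteq> F x} = card (UNIV::'a set) - 1" using q_def by simp
    qed
    show "o_polynomial F" using opoly_iff[OF c] inj nc by simp
  qed
qed

end
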